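(* Let $G=A\oplus D$ be an abelian group with $A$ reduced and $D$ divisible. Then $G$ is uniformly strongly co-Hopfian if and only if both $A$ and $D$ are uniformly strongly co-Hopfian.
   Context: All groups are abelian. A group $G$ is uniformly strongly co-Hopfian if there is a fixed $m\in\mathbb N$ such that $\phi^m(G)=\phi^{m+1}(G)$ for every endomorphism $\phi$ of $G$. *)

theory Defs
  imports Main
begin

fun nsmul :: "nat \<Rightarrow> 'a::ab_group_add \<Rightarrow> 'a" where
  "nsmul 0 x = 0"
| "nsmul (Suc n) x = x + nsmul n x"

definition is_subgroup :: "'a::ab_group_add set \<Rightarrow> bool" where
  "is_subgroup H \<longleftrightarrow> 0 \<in> H \<and> (\<forall>x\<in>H. \<forall>y\<in>H. x + y \<in> H) \<and> (\<forall>x\<in>H. - x \<in> H)"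

definition is_endo :: "'a::ab_group_add set \<Rightarrow> ('a \<Rightarrow> 'a) \<Rightarrow> bool" where
  "is_endo H f \<longleftrightarrow> (\<forall>x\<in>H. f x \<in> H) \<and> (\<forall>x\<in>H. \<forall>y\<in>H. f (x + y) = f x + f y)"

definition divisible_grp :: "'a::ab_group_add set \<Rightarrow> bool" where
  "divisible_grp H \<longleftrightarrow> (\<forall>x\<in>H. \<forall>n::nat. n > 0 \<longrightarrow> (\<exists>y\<in>H. nsmul n y = x))"

definition reduced_grp :: "'a::ab_group_add set \<Rightarrow> bool" where
  "reduced_grp H \<longleftrightarrow> (\<forall>K. is_subgroup K \<and> K \<subseteq> H \<and> divisible_grp K \<longrightarrow> K = {0})"

definition uniformly_strongly_coHopfian :: "'a::ab_group_add set \<Rightarrow> bool" where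
  "uniformly_strongly_coHopfian H \<longleftrightarrow>
     (\<exists>m::nat. \<forall>f. is_endo H f \<longrightarrow> (f ^^ m) ` H = (f ^^ Suc m) ` H)"

end

theory Submission
  imports Defs
begin

lemma sg0: "is_subgroup H \<Longrightarrow> 0 \<in> H" by (simp add: is_subgroup_def)
lemma sgadd: "is_subgroup H \<Longrightarrow> x \<in> H \<Longrightarrow> y \<in> H \<Longrightarrow> x + y \<in> H" by (simp add: is_subgroup_def)
lemma sgneg: "is_subgroup H \<Longrightarrow> x \<in> H \<Longrightarrow> - x \<in> H" by (simp add: is_subgroup_def)
lemma sgdiff: "is_subgroup H \<Longrightarrow> x \<in> H \<Longrightarrow> y \<in> H \<Longrightarrow> x - y \<in> H"
  using sgadd sgneg by (metis diff_conv_add_uminus)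

lemma endo_mem: "is_endo H f \<Longrightarrow> x \<in> H \<Longrightarrow> f x \<in> H" by (simp add: is_endo_def)
lemma endo_add: "is_endo H f \<Longrightarrow> x \<in> H \<Longrightarrow> y \<in> H \<Longrightarrow> f (x + y) = f x + f y" by (simp add: is_endo_def)
lemma endo_0: "is_endo H f \<Longrightarrow> is_subgroup H \<Longrightarrow> f 0 = 0"
  using endo_add[of H f 0 0] sg0 by force
lemma endo_neg: "is_endo H f \<Longrightarrow> is_subgroup H \<Longrightarrow> x \<in> H \<Longrightarrow> f (- x) = - f x"
  using endo_add[of H f x "-x"] endo_0 sgneg
  by (metis add.right_inverse add_eq_0_iff)
lemma endo_diff: "is_endo H f \<Longrightarrow> is_subgroup H \<Longrightarrow> x \<in> H \<Longrightarrow> y \<in> H \<Longrightarrow> f (x - y) = f x - f y"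
  using endo_add[of H f x "-y"] endo_neg[of H f y] sgneg by (metis diff_conv_add_uminus)

lemma endo_pow: "is_endo H f \<Longrightarrow> is_endo H (f ^^ n)"
proof (induction n)
  case 0 then show ?case by (simp add: is_endo_def)
next
  case (Suc n) then show ?case by (simp add: is_endo_def)
qed

lemma nsmul_mem: "is_subgroup H \<Longrightarrow> x \<in> H \<Longrightarrow> nsmul n x \<in> H"
  by (induction n) (auto simp: sg0 sgadd)
lemma nsmul_add: "nsmul n (x + y) = nsmul n x + nsmul n y"
  by (induction n) (auto simp: algebra_simps)
lemma nsmul_diff: "nsmul n (x - y) = nsmul n x - nsmul n y"
  by (metis diff_add_cancel eq_diff_eq nsmul_add)
lemma endo_nsmul: "is_endo H f \<Longrightarrow> is_subgroup H \<Longrightarrow> x \<in> H \<Longrightarrow> f (nsmul n x) = nsmul n (f x)"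
  by (induction n) (auto simp: endo_0 endo_add nsmul_mem)

lemma stab: fixes f :: "'a \<Rightarrow> 'a" assumes "(f ^^ m) ` H = (f ^^ Suc m) ` H" shows "(f ^^ (m + j)) ` H = (f ^^ m) ` H"
proof (induction j)
  case 0 then show ?case by simp
next
  case (Suc j)
  have "(f ^^ (m + Suc j)) ` H = f ` ((f ^^ (m + j)) ` H)" by (simp add: image_comp)
  also have "\<dots> = f ` ((f ^^ m) ` H)" using Suc by simp
  also have "\<dots> = (f ^^ Suc m) ` H" by (simp add: image_comp)
  finally show ?case using assms by simp
qed

locale dsum =
  fixes X Y G :: "'a::ab_group_add set"
  assumes sX: "is_subgroup X" and sY: "is_subgroup Y" and XY: "X \<inter> Y = {0}"
    and Gdef: "G = {x + y | x y. x \<in> X \<and> y \<in> Y}"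
begin

definition p :: "'a \<Rightarrow> 'a" where "p g = (SOME x. x \<in> X \<and> g - x \<in> Y)"

lemma XG: "x \<in> X \<Longrightarrow> x \<in> G" using Gdef sg0[OF sY] by force
lemma YG: "y \<in> Y \<Longrightarrow> y \<in> G" using Gdef sg0[OF sX] by force

lemma sG: "is_subgroup G"
proof -
  have "0 \<in> G" using XG sg0[OF sX] by blast
  moreover have "\<forall>g\<in>G. \<forall>h\<in>G. g + h \<in> G"
  proof (intro ballI)
    fix g h assume "g \<in> G" "h \<in> G"
    then obtain x y x' y' where "g = x + y" "h = x' + y'" "x \<in> X" "y \<in> Y" "x' \<in> X" "y' \<in> Y"
      using Gdef by auto
    then have "g + h = (x + x') + (y + y')" "x + x' \<in> X" "y + y' \<in> Y"
      using sgadd sX sY by (auto simp: algebra_simps)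
    then show "g + h \<in> G" using Gdef by blast
  qed
  moreover have "\<forall>g\<in>G. - g \<in> G"
  proof
    fix g assume "g \<in> G"
    then obtain x y where "g = x + y" "x \<in> X" "y \<in> Y" using Gdef by auto
    then have "- g = (- x) + (- y)" "- x \<in> X" "- y \<in> Y" using sgneg sX sY by auto
    then show "- g \<in> G" using Gdef by blast
  qed
  ultimately show ?thesis by (simp add: is_subgroup_def)
qed

lemma p_ex: "g \<in> G \<Longrightarrow> p g \<in> X \<and> g - p g \<in> Y"
proof -
  assume "g \<in> G"
  then obtain x y where "g = x + y" "x \<in> X" "y \<in> Y" using Gdef by auto
  then have "\<exists>x. x \<in> X \<and> g - x \<in> Y" by auto
  then show ?thesis unfolding p_def by (rule someI_ex)
qed

lemma p_X: "g \<in> G \<Longrightarrow> p g \<in> X" using p_ex by blast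
lemma p_Y: "g \<in> G \<Longrightarrow> g - p g \<in> Y" using p_ex by blast

lemma XY_zero: "x \<in> X \<Longrightarrow> x \<in> Y \<Longrightarrow> x = 0" using XY by blast

lemma p_uniq: assumes "x \<in> X" "y \<in> Y" shows "p (x + y) = x"
proof -
  have g: "x + y \<in> G" using Gdef assms by blast
  have "x + y - p (x + y) \<in> Y" using p_Y g by blast
  then have "x + y - p (x + y) - y \<in> Y" using sgdiff[OF sY] assms by blast
  moreover have "x + y - p (x + y) - y = x - p (x + y)" by simp
  moreover have "x - p (x + y) \<in> X" using sgdiff[OF sX] assms p_X g by blast
  ultimately have "x - p (x + y) = 0" using XY_zero by metis
  then show ?thesis by simp
qed

lemma p_X_id: "x \<in> X \<Longrightarrow> p x = x" using p_uniq[of x 0] sg0[OF sY] by simp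
lemma p_Y_zero: "y \<in> Y \<Longrightarrow> p y = 0" using p_uniq[of 0 y] sg0[OF sX] by simp

lemma decomp: "g \<in> G \<Longrightarrow> g = p g + (g - p g)" by simp

lemma p_add: assumes "g \<in> G" "h \<in> G" shows "p (g + h) = p g + p h"
proof -
  have "g + h = (p g + p h) + ((g - p g) + (h - p h))" by (simp add: algebra_simps)
  moreover have "p g + p h \<in> X" using assms p_X sgadd[OF sX] by blast
  moreover have "(g - p g) + (h - p h) \<in> Y" using assms p_Y sgadd[OF sY] by blast
  ultimately show ?thesis using p_uniq by metis
qed

lemma pG: "p ` G = X"
  using p_X p_X_id XG by (metis image_eqI image_subsetI subsetI subset_antisym)

lemma sym: "dsum Y X G"
proof
  show "is_subgroup Y" by (rule sY)
  show "is_subgroup X" by (rule sX)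
  show "Y \<inter> X = {0}" using XY by blast
  show "G = {y + x | y x. y \<in> Y \<and> x \<in> X}" using Gdef by (auto simp: add.commute) (metis add.commute)+
qed

lemma fwd:
  assumes "uniformly_strongly_coHopfian G"
  shows "uniformly_strongly_coHopfian X"
proof -
  obtain m where m: "\<And>f. is_endo G f \<Longrightarrow> (f ^^ m) ` G = (f ^^ Suc m) ` G"
    using assms unfolding uniformly_strongly_coHopfian_def by blast
  have "(f ^^ m) ` X = (f ^^ Suc m) ` X" if f: "is_endo X f" for f
  proof -
    define \<phi> where "\<phi> g = f (p g) + (g - p g)" for g
    have pphi: "p (\<phi> g) = f (p g)" if "g \<in> G" for g
      unfolding \<phi>_def using p_uniq[OF endo_mem[OF f p_X[OF that]] p_Y[OF that]] .
    have phiG: "\<phi> g \<in> G" if "g \<in> G" for g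
      unfolding \<phi>_def using sgadd[OF sG XG[OF endo_mem[OF f p_X[OF that]]] YG[OF p_Y[OF that]]] .
    have endo: "is_endo G \<phi>"
      unfolding is_endo_def
    proof (intro conjI ballI)
      fix g assume "g \<in> G" then show "\<phi> g \<in> G" by (rule phiG)
    next
      fix g h assume gh: "g \<in> G" "h \<in> G"
      then show "\<phi> (g + h) = \<phi> g + \<phi> h"
        unfolding \<phi>_def using p_add endo_add[OF f] p_X by (simp add: algebra_simps)
    qed
    have pj: "p ((\<phi> ^^ j) g) = (f ^^ j) (p g)" if "g \<in> G" for g j
      using that
    proof (induction j)
      case 0 then show ?case by simp
    next
      case (Suc j)
      have "(\<phi> ^^ j) g \<in> G" using endo_mem[OF endo_pow[OF endo]] Suc.prems by blast
      then show ?case using pphi Suc by simp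
    qed
    have img: "(f ^^ j) ` X = p ` ((\<phi> ^^ j) ` G)" for j
    proof -
      have "(f ^^ j) ` X = (f ^^ j) ` (p ` G)" using pG by simp
      also have "\<dots> = (\<lambda>g. p ((\<phi> ^^ j) g)) ` G" using pj by (auto simp: image_iff)
      also have "\<dots> = p ` ((\<phi> ^^ j) ` G)" by (simp add: image_comp)
      finally show ?thesis .
    qed
    show ?thesis unfolding img m[OF endo] ..
  qed
  then show ?thesis unfolding uniformly_strongly_coHopfian_def by blast
qed

lemma phiY:
  assumes red: "reduced_grp X" and dv: "divisible_grp Y" and en: "is_endo G \<phi>" and d: "d \<in> Y"
  shows "\<phi> d \<in> Y"
proof -
  define K where "K = {x \<in> X. \<exists>d\<in>Y. \<phi> d - x \<in> Y}"
  have Gsub: "\<And>y. y \<in> Y \<Longrightarrow> y \<in> G" by (rule YG)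
  have sK: "is_subgroup K"
    unfolding is_subgroup_def
  proof (intro conjI ballI)
    show "0 \<in> K" unfolding K_def using sg0[OF sX] sg0[OF sY] endo_0[OF en sG] by force
  next
    fix x y assume "x \<in> K" "y \<in> K"
    then obtain d1 d2 where h: "x \<in> X" "y \<in> X" "d1 \<in> Y" "d2 \<in> Y" "\<phi> d1 - x \<in> Y" "\<phi> d2 - y \<in> Y"
      unfolding K_def by blast
    have "\<phi> (d1 + d2) = \<phi> d1 + \<phi> d2" using endo_add[OF en YG[OF h(3)] YG[OF h(4)]] .
    then have eq: "\<phi> (d1 + d2) - (x + y) = (\<phi> d1 - x) + (\<phi> d2 - y)" by (simp add: algebra_simps)
    have "\<phi> (d1 + d2) - (x + y) \<in> Y" unfolding eq using sgadd[OF sY h(5) h(6)] .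
    moreover have "d1 + d2 \<in> Y" using sgadd[OF sY h(3) h(4)] .
    moreover have "x + y \<in> X" using sgadd[OF sX h(1) h(2)] .
    ultimately show "x + y \<in> K" unfolding K_def by blast
  next
    fix x assume "x \<in> K"
    then obtain d1 where h: "x \<in> X" "d1 \<in> Y" "\<phi> d1 - x \<in> Y" unfolding K_def by blast
    have "\<phi> (- d1) = - \<phi> d1" using endo_neg[OF en sG YG[OF h(2)]] .
    then have eq: "\<phi> (- d1) - (- x) = - (\<phi> d1 - x)" by simp
    have "\<phi> (- d1) - (- x) \<in> Y" unfolding eq using sgneg[OF sY h(3)] .
    moreover have "- d1 \<in> Y" using sgneg[OF sY h(2)] .
    moreover have "- x \<in> X" using sgneg[OF sX h(1)] .
    ultimately show "- x \<in> K" unfolding K_def by blast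
  qed
  have KX: "K \<subseteq> X" unfolding K_def by blast
  have dK: "divisible_grp K"
    unfolding divisible_grp_def
  proof (intro ballI allI impI)
    fix x and n :: nat assume x: "x \<in> K" and n: "n > 0"
    then obtain d1 where h: "x \<in> X" "d1 \<in> Y" "\<phi> d1 - x \<in> Y" unfolding K_def by blast
    obtain y where y: "y \<in> Y" "nsmul n y = d1" using dv h(2) n unfolding divisible_grp_def by blast
    have yG: "y \<in> G" using YG[OF y(1)] .
    have pyG: "\<phi> y \<in> G" using endo_mem[OF en yG] .
    define x' where "x' = p (\<phi> y)"
    define e where "e = \<phi> y - x'"
    have x'X: "x' \<in> X" unfolding x'_def using p_X[OF pyG] .
    have eY: "e \<in> Y" unfolding e_def x'_def using p_Y[OF pyG] .
    have x'K: "x' \<in> K" unfolding K_def using x'X y(1) eY e_def by blast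
    have "\<phi> d1 = nsmul n (\<phi> y)" using endo_nsmul[OF en sG yG, of n] y(2) by simp
    also have "\<dots> = nsmul n x' + nsmul n e" unfolding e_def by (simp add: nsmul_add[symmetric])
    finally have eq: "nsmul n x' - x = (\<phi> d1 - x) - nsmul n e" by (simp add: algebra_simps)
    have "nsmul n x' - x \<in> Y" unfolding eq using sgdiff[OF sY h(3) nsmul_mem[OF sY eY]] .
    moreover have "nsmul n x' - x \<in> X" using sgdiff[OF sX nsmul_mem[OF sX x'X] h(1)] .
    ultimately have "nsmul n x' - x = 0" using XY_zero by blast
    then have "nsmul n x' = x" by simp
    then show "\<exists>y\<in>K. nsmul n y = x" using x'K by blast
  qed
  have K0: "K = {0}" using red sK KX dK unfolding reduced_grp_def by blast
  have dG: "\<phi> d \<in> G" using endo_mem[OF en YG[OF d]] .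
  have "p (\<phi> d) \<in> K" unfolding K_def using p_X[OF dG] p_Y[OF dG] d by blast
  then have "p (\<phi> d) = 0" using K0 by blast
  then show ?thesis using p_Y[OF dG] by simp
qed

lemma bwd:
  assumes red: "reduced_grp X" and dv: "divisible_grp Y"
    and hX: "uniformly_strongly_coHopfian X" and hY: "uniformly_strongly_coHopfian Y"
  shows "uniformly_strongly_coHopfian G"
proof -
  obtain mX where mX: "\<And>f. is_endo X f \<Longrightarrow> (f ^^ mX) ` X = (f ^^ Suc mX) ` X"
    using hX unfolding uniformly_strongly_coHopfian_def by blast
  obtain mY where mY: "\<And>f. is_endo Y f \<Longrightarrow> (f ^^ mY) ` Y = (f ^^ Suc mY) ` Y"
    using hY unfolding uniformly_strongly_coHopfian_def by blast
  have "(\<phi> ^^ (mY + mX)) ` G = (\<phi> ^^ Suc (mY + mX)) ` G" if en: "is_endo G \<phi>" for \<phi>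
  proof -
    define \<alpha> where "\<alpha> x = p (\<phi> x)" for x
    have enY: "is_endo Y \<phi>" unfolding is_endo_def
      using phiY[OF red dv en] endo_add[OF en YG YG] by blast
    have enX: "is_endo X \<alpha>" unfolding is_endo_def \<alpha>_def
    proof (intro conjI ballI)
      fix x assume "x \<in> X" then show "p (\<phi> x) \<in> X" using p_X endo_mem[OF en XG] by blast
    next
      fix x y assume "x \<in> X" "y \<in> X"
      then show "p (\<phi> (x + y)) = p (\<phi> x) + p (\<phi> y)"
        using endo_add[OF en XG XG] p_add endo_mem[OF en XG] by simp
    qed
    have pphi: "p (\<phi> g) = \<alpha> (p g)" if g: "g \<in> G" for g
    proof -
      have a: "p g \<in> G" using XG[OF p_X[OF g]] .
      have b: "g - p g \<in> G" using YG[OF p_Y[OF g]] .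
      have "\<phi> g = \<phi> (p g) + \<phi> (g - p g)" using endo_add[OF en a b] by simp
      then have "p (\<phi> g) = p (\<phi> (p g)) + p (\<phi> (g - p g))"
        using p_add endo_mem[OF en a] endo_mem[OF en b] by simp
      also have "p (\<phi> (g - p g)) = 0" using p_Y_zero phiY[OF red dv en p_Y[OF g]] by blast
      finally show ?thesis unfolding \<alpha>_def by simp
    qed
    have pj: "p ((\<phi> ^^ j) g) = (\<alpha> ^^ j) (p g)" if "g \<in> G" for g j
      using that
    proof (induction j)
      case 0 then show ?case by simp
    next
      case (Suc j)
      have "(\<phi> ^^ j) g \<in> G" using endo_mem[OF endo_pow[OF en] Suc.prems] .
      then show ?case using pphi Suc by simp
    qed
    have stY: "(\<phi> ^^ (mY + Suc mX)) ` Y = (\<phi> ^^ mY) ` Y" using stab[OF mY[OF enY]] .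
    have stX: "(\<alpha> ^^ mX) ` X = (\<alpha> ^^ Suc mX) ` X" using mX[OF enX] .
    show ?thesis
    proof
      show "(\<phi> ^^ Suc (mY + mX)) ` G \<subseteq> (\<phi> ^^ (mY + mX)) ` G"
      proof
        fix z assume "z \<in> (\<phi> ^^ Suc (mY + mX)) ` G"
        then obtain g where g: "g \<in> G" "z = (\<phi> ^^ Suc (mY + mX)) g" by blast
        have "z = (\<phi> ^^ (mY + mX)) (\<phi> g)" using g(2) by (simp add: funpow_Suc_right del: funpow.simps)
        then show "z \<in> (\<phi> ^^ (mY + mX)) ` G" using endo_mem[OF en g(1)] by blast
      qed
    next
      show "(\<phi> ^^ (mY + mX)) ` G \<subseteq> (\<phi> ^^ Suc (mY + mX)) ` G"
      proof
        fix z assume "z \<in> (\<phi> ^^ (mY + mX)) ` G"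
        then obtain g where g: "g \<in> G" "z = (\<phi> ^^ (mY + mX)) g" by blast
        define a0 where "a0 = (\<alpha> ^^ mX) (p g)"
        have "a0 \<in> (\<alpha> ^^ Suc mX) ` X" using stX p_X[OF g(1)] unfolding a0_def by blast
        then obtain a1 where a1: "a1 \<in> X" "(\<alpha> ^^ Suc mX) a1 = a0" by blast
        define u where "u = (\<phi> ^^ mX) g"
        define v where "v = (\<phi> ^^ Suc mX) a1"
        have uG: "u \<in> G" unfolding u_def using endo_mem[OF endo_pow[OF en] g(1)] .
        have vG: "v \<in> G" unfolding v_def using endo_mem[OF endo_pow[OF en] XG[OF a1(1)]] .
        have pu: "p u = a0" unfolding u_def a0_def using pj[OF g(1)] .
        have pv: "p v = a0" unfolding v_def using pj[OF XG[OF a1(1)], of "Suc mX"] p_X_id[OF a1(1)] a1(2) by (simp del: funpow.simps)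
        have e1: "u - a0 \<in> Y" using p_Y[OF uG] pu by simp
        have e2: "v - a0 \<in> Y" using p_Y[OF vG] pv by simp
        have eY: "u - v \<in> Y" using sgdiff[OF sY e1 e2] by simp
        have z1: "z = (\<phi> ^^ mY) u" unfolding g(2) u_def by (simp add: funpow_add)
        have z2: "(\<phi> ^^ Suc (mY + mX)) a1 = (\<phi> ^^ mY) v"
        proof -
          have "Suc (mY + mX) = mY + Suc mX" by simp
          then show ?thesis unfolding v_def by (metis comp_apply funpow_add)
        qed
        have "(\<phi> ^^ mY) (u - v) \<in> (\<phi> ^^ (mY + Suc mX)) ` Y" using stY eY by blast
        then obtain e' where e': "e' \<in> Y" "(\<phi> ^^ mY) (u - v) = (\<phi> ^^ Suc (mY + mX)) e'" by auto
        have "z = (\<phi> ^^ mY) v + (\<phi> ^^ mY) (u - v)"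
          using z1 endo_diff[OF endo_pow[OF en] sG uG vG] by simp
        also have "\<dots> = (\<phi> ^^ Suc (mY + mX)) a1 + (\<phi> ^^ Suc (mY + mX)) e'" using z2 e'(2) by simp
        also have "\<dots> = (\<phi> ^^ Suc (mY + mX)) (a1 + e')"
          using endo_add[OF endo_pow[OF en] XG[OF a1(1)] YG[OF e'(1)], of "Suc (mY + mX)"] by (simp del: funpow.simps)
        finally show "z \<in> (\<phi> ^^ Suc (mY + mX)) ` G"
          using sgadd[OF sG XG[OF a1(1)] YG[OF e'(1)]] by blast
      qed
    qed
  qed
  then show ?thesis unfolding uniformly_strongly_coHopfian_def by blast
qed

end

theorem mainTheorem10:
  fixes G A D :: "'a::ab_group_add set"
  assumes "is_subgroup A" and "is_subgroup D"
    and "A \<inter> D = {0}"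
    and "G = {a + d | a d. a \<in> A \<and> d \<in> D}"
    and "reduced_grp A" and "divisible_grp D"
  shows "uniformly_strongly_coHopfian G \<longleftrightarrow>
         uniformly_strongly_coHopfian A \<and> uniformly_strongly_coHopfian D"
proof -
  interpret dsum A D G using assms(1-4) by unfold_locales
  interpret s: dsum D A G by (rule sym)
  show ?thesis using fwd s.fwd bwd[OF assms(5,6)] by blast
qed

end
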